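(* Let $u\in L_{\mathrm{up}}$ and $(\ell_1,\ell_2)\in A_u$. Then (a) $\mathrm{apex}(\ell_1)$ is a strict ancestor of $\mathrm{apex}(\ell_2)$ in $G$, and (b) $P_{u,\ell_1}$ is the edge set of a subpath of the $\mathrm{apex}(\ell_1)$-$\mathrm{apex}(\ell_2)$ path in $G$.
   Context: Let $(G=(V,E),L,w)$ be a WTAP instance (spanning tree $G$, links $L\subseteq\binom V2$, weights $w>0$) with a fixed root $r\in V$, and let $F\subseteq L$ be a WTAP solution, i.e. $\bigcup_{\ell\in F}P_\ell=E$, where $P_\ell$ is the edge set of the tree path between the endpoints of $\ell$ and $V_\ell$ its vertex set. Ancestors of $v$ are the vertices on the $r$-$v$ path in $G$ (including $r$ and $v$); strict ancestors exclude $v$; descendants are defined reciprocally. $\mathrm{apex}(\ell)$ is the vertex of $V_\ell$ closest to $r$. An up-link is a link $\{t,b\}$ with $t$ an ancestor of $b$; $L_{\mathrm{up}}$ is the set of up-links. For $v\in V$ let $B_v=\{\ell\in F\colon\mathrm{apex}(\ell)\text{ is a descendant of }v\}$. For an up-link $u=\{t,b\}$ with $t$ an ancestor of $b$, let $v_u$ be the ancestor of $t$ farthest from $r$ such that $P_u\subseteq\bigcup_{\ell\in B_{v_u}}P_\ell$, and fix $F_u\subseteq B_{v_u}$ inclusion-wise minimal with $P_u\subseteq\bigcup_{\ell\in F_u}P_\ell$. For $\ell\in F_u$ let $P_{u,\ell}=P_u\setminus\bigcup_{\bar\ell\in F_u\setminus\{\ell\}}P_{\bar\ell}$; these sets are nonempty,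 pairwise disjoint, and each is the edge set of a path. Define $\ell_1\prec_u\ell_2$ iff the edges of $P_{u,\ell_1}$ appear before those of $P_{u,\ell_2}$ on the $t$-$b$ path in $G$. If $\ell_1\prec_u\cdots\prec_u\ell_q$ are the links of $F_u$, let $A_u=\{(\ell_i,\ell_{i+1})\colon i=1,\dots,q-1\}$. *)

theory Defs
  imports Complex_Main
begin

text \<open>Graphs: vertices of type 'a, undirected edges and links are 2-element sets.
  A path is a nonempty list of distinct vertices, consecutive ones joined by edges.\<close>

definition is_path :: "'a set set \<Rightarrow> 'a list \<Rightarrow> 'a \<Rightarrow> 'a \<Rightarrow> bool" where
  "is_path E p x y \<longleftrightarrow> p \<noteq> [] \<and> hd p = x \<and> last p = y \<and> distinct p \<and>
     (\<forall>i. Suc i < length p \<longrightarrow> {p ! i, p ! Suc i} \<in> E)"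

definition path_edges :: "'a list \<Rightarrow> 'a set set" where
  "path_edges p = {{p ! i, p ! Suc i} | i. Suc i < length p}"

definition is_tree :: "'a set \<Rightarrow> 'a set set \<Rightarrow> bool" where
  "is_tree V E \<longleftrightarrow> finite V \<and> V \<noteq> {} \<and>
     E \<subseteq> {{x, y} | x y. x \<in> V \<and> y \<in> V \<and> x \<noteq> y} \<and>
     (\<forall>x\<in>V. \<forall>y\<in>V. \<exists>!p. is_path E p x y)"

definition tpath :: "'a set set \<Rightarrow> 'a \<Rightarrow> 'a \<Rightarrow> 'a list" where
  "tpath E x y = (THE p. is_path E p x y)"

definition is_link :: "'a set \<Rightarrow> 'a set \<Rightarrow> bool" where
  "is_link V l \<longleftrightarrow> (\<exists>x y. x \<in> V \<and> y \<in> V \<and> x \<noteq> y \<and> l = {x, y})"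

definition Pl :: "'a set set \<Rightarrow> 'a set \<Rightarrow> 'a set set" where
  "Pl E l = \<Union>{path_edges (tpath E x y) | x y. l = {x, y}}"

definition Vl :: "'a set set \<Rightarrow> 'a set \<Rightarrow> 'a set" where
  "Vl E l = \<Union>{set (tpath E x y) | x y. l = {x, y}}"

definition ancestor :: "'a set set \<Rightarrow> 'a \<Rightarrow> 'a \<Rightarrow> 'a \<Rightarrow> bool" where
  "ancestor E r a v \<longleftrightarrow> a \<in> set (tpath E r v)"

definition strict_ancestor :: "'a set set \<Rightarrow> 'a \<Rightarrow> 'a \<Rightarrow> 'a \<Rightarrow> bool" where
  "strict_ancestor E r a v \<longleftrightarrow> ancestor E r a v \<and> a \<noteq> v"

definition depth :: "'a set set \<Rightarrow> 'a \<Rightarrow> 'a \<Rightarrow> nat" where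
  "depth E r v = length (tpath E r v) - 1"

definition apex :: "'a set set \<Rightarrow> 'a \<Rightarrow> 'a set \<Rightarrow> 'a" where
  "apex E r l = (THE a. a \<in> Vl E l \<and> (\<forall>b\<in>Vl E l. depth E r a \<le> depth E r b))"

definition Bset :: "'a set set \<Rightarrow> 'a \<Rightarrow> 'a set set \<Rightarrow> 'a \<Rightarrow> 'a set set" where
  "Bset E r F v = {l \<in> F. ancestor E r v (apex E r l)}"

text \<open>v_u for the up-link u = {t,b} (t ancestor of b): the ancestor of t farthest
  from r such that P_u is covered by the links in B_{v_u}.\<close>
definition covers_at :: "'a set set \<Rightarrow> 'a \<Rightarrow> 'a set set \<Rightarrow> 'a set \<Rightarrow> 'a \<Rightarrow> bool" where
  "covers_at E r F u v \<longleftrightarrow> Pl E u \<subseteq> \<Union>(Pl E ` Bset E r F v)"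

definition vu :: "'a set set \<Rightarrow> 'a \<Rightarrow> 'a set set \<Rightarrow> 'a set \<Rightarrow> 'a \<Rightarrow> 'a" where
  "vu E r F u t = (THE v. ancestor E r v t \<and> covers_at E r F u v \<and>
      (\<forall>w. ancestor E r w t \<and> covers_at E r F u w \<longrightarrow> depth E r w \<le> depth E r v))"

definition Pul :: "'a set set \<Rightarrow> 'a set set \<Rightarrow> 'a set \<Rightarrow> 'a set \<Rightarrow> 'a set set" where
  "Pul E Fu u l = Pl E u - \<Union>(Pl E ` (Fu - {l}))"

definition prec_u :: "'a set set \<Rightarrow> 'a set set \<Rightarrow> 'a set \<Rightarrow> 'a \<Rightarrow> 'a \<Rightarrow> 'a set \<Rightarrow> 'a set \<Rightarrow> bool" where
  "prec_u E Fu u t b l1 l2 \<longleftrightarrow>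
     (let p = tpath E t b in
       \<forall>i j. Suc i < length p \<longrightarrow> Suc j < length p \<longrightarrow>
         {p ! i, p ! Suc i} \<in> Pul E Fu u l1 \<longrightarrow> {p ! j, p ! Suc j} \<in> Pul E Fu u l2 \<longrightarrow> i < j)"

definition Au :: "'a set set \<Rightarrow> 'a set set \<Rightarrow> 'a set \<Rightarrow> 'a \<Rightarrow> 'a \<Rightarrow> ('a set \<times> 'a set) set" where
  "Au E Fu u t b = {(ls ! i, ls ! Suc i) | ls i.
       distinct ls \<and> set ls = Fu \<and> sorted_wrt (prec_u E Fu u t b) ls \<and> Suc i < length ls}"

end

theory Submission
  imports Defs
begin

lemma in_set_drop_iff: "v \<in> set (drop a xs) \<longleftrightarrow> (\<exists>i. a \<le> i \<and> i < length xs \<and> v = xs ! i)"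
proof
  assume "v \<in> set (drop a xs)"
  then obtain j where "j < length (drop a xs)" "v = drop a xs ! j" by (auto simp: in_set_conv_nth)
  then show "\<exists>i. a \<le> i \<and> i < length xs \<and> v = xs ! i" by (intro exI[of _ "a+j"]) auto
next
  assume "\<exists>i. a \<le> i \<and> i < length xs \<and> v = xs ! i"
  then obtain i where "a \<le> i" "i < length xs" "v = xs ! i" by auto
  then show "v \<in> set (drop a xs)" unfolding in_set_conv_nth
    by (intro exI[of _ "i - a"]) auto
qed

lemma dt_nth: "i < length (drop a (take c p)) \<Longrightarrow> drop a (take c p) ! i = p ! (a+i)"
  by (subst nth_drop) auto

lemma is_path_alt: "is_path E p x y \<longleftrightarrow> p \<noteq> [] \<and> hd p = x \<and> last p = y \<and> distinct p \<and> path_edges p \<subseteq> E"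
  unfolding is_path_def path_edges_def by blast

lemma pe_sub: "path_edges (drop a (take c p)) = {{p!k, p!Suc k} | k. a \<le> k \<and> Suc k < min c (length p)}"
proof -
  have "path_edges (drop a (take c p)) \<subseteq> {{p!k, p!Suc k} | k. a \<le> k \<and> Suc k < min c (length p)}"
  proof
    fix e assume "e \<in> path_edges (drop a (take c p))"
    then obtain i where i: "Suc i < length (drop a (take c p))" "e = {drop a (take c p) ! i, drop a (take c p) ! Suc i}"
      unfolding path_edges_def by blast
    have "drop a (take c p) ! i = p ! (a+i)" "drop a (take c p) ! Suc i = p ! Suc (a+i)" using i(1) dt_nth[of i a c p] dt_nth[of "Suc i" a c p] by simp_all
    then have "e = {p!(a+i), p!Suc (a+i)}" using i(2) by simp
    moreover have "a \<le> a+i \<and> Suc (a+i) < min c (length p)" using i(1) by (simp add: less_diff_conv)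
    ultimately show "e \<in> {{p!k, p!Suc k} | k. a \<le> k \<and> Suc k < min c (length p)}"
      by blast
  qed
  moreover have "{{p!k, p!Suc k} | k. a \<le> k \<and> Suc k < min c (length p)} \<subseteq> path_edges (drop a (take c p))"
  proof
    fix e assume "e \<in> {{p!k, p!Suc k} | k. a \<le> k \<and> Suc k < min c (length p)}"
    then obtain k where k: "a \<le> k" "Suc k < min c (length p)" "e = {p!k, p!Suc k}" by blast
    then show "e \<in> path_edges (drop a (take c p))" unfolding path_edges_def
      by (intro CollectI exI[of _ "k - a"]) (auto simp: Suc_diff_le)
  qed
  ultimately show ?thesis by blast
qed

lemma pe_drop: "path_edges (drop a p) = {{p!k, p!Suc k} | k. a \<le> k \<and> Suc k < length p}"
  using pe_sub[of a "length p" p] by simp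

lemma pe_Nil[simp]: "path_edges [] = {}" unfolding path_edges_def by auto
lemma pe_single[simp]: "path_edges [a] = {}" unfolding path_edges_def by auto
lemma pe_Cons2[simp]: "path_edges (a # b # p) = insert {a,b} (path_edges (b # p))"
proof (rule set_eqI)
  fix e
  show "e \<in> path_edges (a # b # p) \<longleftrightarrow> e \<in> insert {a,b} (path_edges (b # p))"
  proof
    assume "e \<in> path_edges (a # b # p)"
    then obtain i where i: "Suc i < length (a#b#p)" "e = {(a#b#p)!i, (a#b#p)!Suc i}"
      unfolding path_edges_def by blast
    show "e \<in> insert {a,b} (path_edges (b # p))"
    proof (cases i)
      case 0 then show ?thesis using i by simp
    next
      case (Suc j)
      then have "Suc j < length (b#p)" "e = {(b#p)!j, (b#p)!Suc j}" using i by simp_all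
      then show ?thesis unfolding path_edges_def by blast
    qed
  next
    assume "e \<in> insert {a,b} (path_edges (b # p))"
    then consider "e = {a,b}" | j where "Suc j < length (b#p)" "e = {(b#p)!j, (b#p)!Suc j}"
      unfolding path_edges_def by blast
    then show "e \<in> path_edges (a # b # p)"
    proof cases
      case 1
      have "Suc 0 < length (a#b#p)" "e = {(a#b#p)!0, (a#b#p)!Suc 0}" using 1 by simp_all
      then show ?thesis unfolding path_edges_def by blast
    next
      case 2
      have "Suc (Suc j) < length (a#b#p)" "e = {(a#b#p)!Suc j, (a#b#p)!Suc (Suc j)}" using 2 by simp_all
      then show ?thesis unfolding path_edges_def by blast
    qed
  qed
qed

lemma pe_append_tl: "p \<noteq> [] \<Longrightarrow> q \<noteq> [] \<Longrightarrow> last p = hd q \<Longrightarrow>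
   path_edges (p @ tl q) = path_edges p \<union> path_edges q"
proof (induction p)
  case Nil then show ?case by simp
next
  case (Cons a p)
  show ?case
  proof (cases "p = []")
    case True
    then show ?thesis using Cons.prems by (cases q) auto
  next
    case False
    then obtain c p' where p: "p = c # p'" by (cases p) auto
    have "(a # p) @ tl q = a # c # (p' @ tl q)" using p by simp
    then have "path_edges ((a # p) @ tl q) = insert {a,c} (path_edges (p @ tl q))" using p by simp
    also have "\<dots> = insert {a,c} (path_edges p \<union> path_edges q)"
      using Cons False by simp
    finally show ?thesis using p by simp
  qed
qed

lemma pe_snoc: "p \<noteq> [] \<Longrightarrow> path_edges (p @ [a]) = insert {last p, a} (path_edges p)"
  using pe_append_tl[of p "[last p, a]"] by auto

lemma pe_rev[simp]: "path_edges (rev p) = path_edges p"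
proof (induction p)
  case Nil then show ?case by simp
next
  case (Cons a p)
  show ?case
  proof (cases "p = []")
    case True then show ?thesis by simp
  next
    case False
    then obtain c p' where p: "p = c # p'" by (cases p) auto
    have "path_edges (rev (a # p)) = insert {last (rev p), a} (path_edges (rev p))"
      using pe_snoc[of "rev p" a] False by simp
    also have "\<dots> = insert {c, a} (path_edges p)" using Cons p by (simp add: last_rev)
    finally show ?thesis using p by (simp add: insert_commute)
  qed
qed

lemma is_path_rev: "is_path E p x y \<Longrightarrow> is_path E (rev p) y x"
  unfolding is_path_alt by (auto simp: hd_rev last_rev)

lemma is_path_sub: assumes "is_path E p x y" "i \<le> j" "j < length p"
  shows "is_path E (drop i (take (Suc j) p)) (p!i) (p!j)"
proof -
  have "path_edges (drop i (take (Suc j) p)) \<subseteq> path_edges (drop 0 (take (length p) p))"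
    unfolding pe_sub by auto
  then have "path_edges (drop i (take (Suc j) p)) \<subseteq> E" using assms(1) unfolding is_path_alt by auto
  moreover have "hd (drop i (take (Suc j) p)) = p ! i" using assms by (simp add: hd_drop_conv_nth)
  moreover have "last (drop i (take (Suc j) p)) = p ! j" using assms
    by (simp add: last_conv_nth)
  ultimately show ?thesis using assms unfolding is_path_alt by (auto simp: distinct_drop)
qed

lemma is_path_append: assumes "is_path E p x y" "is_path E q y z" "set p \<inter> set q \<subseteq> {y}"
  shows "is_path E (p @ tl q) x z"
proof -
  obtain q' where q: "q = y # q'" using assms(2) unfolding is_path_alt by (cases q) auto
  have "last (p @ tl q) = z"
  proof (cases "q' = []")
    case True then show ?thesis using assms q unfolding is_path_alt by auto
  next
    case False then show ?thesis using assms q unfolding is_path_alt by auto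
  qed
  moreover have "distinct (p @ tl q)" using assms q unfolding is_path_alt by auto
  moreover have "path_edges (p @ tl q) \<subseteq> E" using assms pe_append_tl[of p q] q unfolding is_path_alt by auto
  ultimately show ?thesis using assms unfolding is_path_alt by auto
qed

lemma tp_path: assumes "is_tree V E" "x \<in> V" "y \<in> V" shows "is_path E (tpath E x y) x y"
proof -
  have "\<exists>!p. is_path E p x y" using assms unfolding is_tree_def by blast
  then show ?thesis unfolding tpath_def by (rule theI')
qed

lemma tp_unique: assumes "is_tree V E" "x \<in> V" "y \<in> V" "is_path E p x y" shows "tpath E x y = p"
proof -
  have "\<exists>!p. is_path E p x y" using assms unfolding is_tree_def by blast
  then show ?thesis unfolding tpath_def using assms(4) by (rule the1_equality)
qed

lemma path_in_V: assumes "is_tree V E" "is_path E p x y" "x \<in> V" shows "set p \<subseteq> V"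
proof
  fix v assume "v \<in> set p"
  then obtain i where i: "i < length p" "v = p ! i" by (auto simp: in_set_conv_nth)
  have EV: "a \<in> V \<and> c \<in> V" if "{a,c} \<in> E" for a c
  proof -
    have "E \<subseteq> {{x, y} | x y. x \<in> V \<and> y \<in> V \<and> x \<noteq> y}" using assms(1) unfolding is_tree_def by simp
    then have "{a,c} \<in> {{x, y} | x y. x \<in> V \<and> y \<in> V \<and> x \<noteq> y}" using that by (rule subsetD)
    then obtain x' y' where "{a,c} = {x',y'}" "x' \<in> V" "y' \<in> V" by blast
    then show "a \<in> V \<and> c \<in> V" by (auto simp: doubleton_eq_iff)
  qed
  have pe: "\<And>j. Suc j < length p \<Longrightarrow> {p!j, p!Suc j} \<in> E" using assms(2) unfolding is_path_def by blast
  show "v \<in> V"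
  proof (cases "Suc i < length p")
    case True then show ?thesis using pe[OF True] EV i by blast
  next
    case False
    show ?thesis
    proof (cases i)
      case 0 then show ?thesis using assms(2,3) i unfolding is_path_def by (metis hd_conv_nth)
    next
      case (Suc j) then have "Suc j < length p" using i by simp
      then show ?thesis using pe EV i Suc by blast
    qed
  qed
qed

lemma rt_basic: assumes "is_tree V E" "r \<in> V" "v \<in> V"
  shows "tpath E r v \<noteq> [] \<and> tpath E r v ! 0 = r \<and> last (tpath E r v) = v \<and> distinct (tpath E r v)
     \<and> set (tpath E r v) \<subseteq> V"
proof -
  have p: "is_path E (tpath E r v) r v" by (rule tp_path[OF assms(1,2,3)])
  have ne: "tpath E r v \<noteq> []" "hd (tpath E r v) = r" using p unfolding is_path_def by simp_all
  have z: "tpath E r v ! 0 = r" using ne by (metis hd_conv_nth)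
  have l: "last (tpath E r v) = v" "distinct (tpath E r v)" using p unfolding is_path_alt by simp_all
  have s: "set (tpath E r v) \<subseteq> V" by (rule path_in_V[OF assms(1) p assms(2)])
  show ?thesis using ne(1) z l s by (intro conjI)
qed

lemma rt_take: assumes "is_tree V E" "r \<in> V" "v \<in> V" "i < length (tpath E r v)"
  shows "tpath E r (tpath E r v ! i) = take (Suc i) (tpath E r v)"
proof -
  let ?p = "tpath E r v"
  have p: "is_path E ?p r v" by (rule tp_path[OF assms(1,2,3)])
  have a: "is_path E (drop 0 (take (Suc i) ?p)) (?p!0) (?p!i)" using is_path_sub[OF p, of 0 i] assms(4) by simp
  have b: "?p ! 0 = r" using rt_basic[OF assms(1-3)] by simp
  have c: "?p ! i \<in> V" using rt_basic[OF assms(1-3)] assms(4) by (meson nth_mem subsetD)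
  have "is_path E (take (Suc i) ?p) r (?p!i)" using a b by simp
  then show ?thesis by (rule tp_unique[OF assms(1,2) c])
qed

lemma rt_idx: assumes "is_tree V E" "r \<in> V" "x \<in> V" "y \<in> V" "i < length (tpath E r x)" "j < length (tpath E r y)"
   "tpath E r x ! i = tpath E r y ! j"
  shows "i = j \<and> take (Suc i) (tpath E r x) = take (Suc i) (tpath E r y)"
proof -
  have "take (Suc i) (tpath E r x) = tpath E r (tpath E r x ! i)" using rt_take[OF assms(1,2,3,5)] by (rule sym)
  also have "\<dots> = tpath E r (tpath E r y ! j)" using assms(7) by (rule arg_cong)
  also have "\<dots> = take (Suc j) (tpath E r y)" by (rule rt_take[OF assms(1,2,4,6)])
  finally have eq: "take (Suc i) (tpath E r x) = take (Suc j) (tpath E r y)" .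
  have l1: "length (take (Suc i) (tpath E r x)) = Suc i" using assms(5) by simp
  have l2: "length (take (Suc j) (tpath E r y)) = Suc j" using assms(6) by simp
  have "i = j" using l1 l2 eq by (metis Suc_inject)
  then show ?thesis using eq by blast
qed

lemma rt_depth: assumes "is_tree V E" "r \<in> V" "v \<in> V" "i < length (tpath E r v)"
  shows "depth E r (tpath E r v ! i) = i"
  unfolding depth_def using rt_take[OF assms] assms(4) by simp

lemma take_eq_nth: "take (Suc k) xs = take (Suc k) ys \<Longrightarrow> k' \<le> k \<Longrightarrow> k < length xs \<Longrightarrow>
   k' < length ys \<and> xs ! k' = ys ! k'"
proof -
  assume a: "take (Suc k) xs = take (Suc k) ys" "k' \<le> k" "k < length xs"
  have "length (take (Suc k) ys) = Suc k" using a(1,3) by (metis length_take min.absorb2 Suc_leI)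
  then have "k' < length ys" using a(2) by simp
  moreover have "xs ! k' = take (Suc k) xs ! k'" using a(2) by simp
  moreover have "ys ! k' = take (Suc k) ys ! k'" using a(2) by simp
  ultimately show ?thesis using a(1) by simp
qed

lemma down_closed_card: assumes "finite A" "\<forall>k\<in>A. \<forall>k'\<le>k. k' \<in> A" shows "A = {..<card A}"
proof (cases "A = {}")
  case True then show ?thesis by simp
next
  case False
  let ?M = "Max A"
  have "A = {..?M}"
  proof
    show "A \<subseteq> {..?M}" using assms(1) by auto
    show "{..?M} \<subseteq> A" using assms(2) Max_in[OF assms(1) False] by auto
  qed
  moreover have "card {..?M} = Suc ?M" by simp
  ultimately have "card A = Suc ?M" by metis
  then show ?thesis using \<open>A = {..?M}\<close> by (metis lessThan_Suc_atMost)
qed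

definition mm :: "'a set set \<Rightarrow> 'a \<Rightarrow> 'a \<Rightarrow> 'a \<Rightarrow> nat" where
  "mm E r b x = card {k. k < length (tpath E r b) \<and> tpath E r b ! k \<in> set (tpath E r x)}"

lemma mm_set: assumes "is_tree V E" "r \<in> V" "b \<in> V" "x \<in> V"
  shows "{k. k < length (tpath E r b) \<and> tpath E r b ! k \<in> set (tpath E r x)} = {..<mm E r b x}"
  unfolding mm_def
proof (rule down_closed_card)
  show "finite {k. k < length (tpath E r b) \<and> tpath E r b ! k \<in> set (tpath E r x)}" by simp
  show "\<forall>k\<in>{k. k < length (tpath E r b) \<and> tpath E r b ! k \<in> set (tpath E r x)}.
      \<forall>k'\<le>k. k' \<in> {k. k < length (tpath E r b) \<and> tpath E r b ! k \<in> set (tpath E r x)}"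
  proof (intro ballI allI impI)
    fix k k' assume k: "k \<in> {k. k < length (tpath E r b) \<and> tpath E r b ! k \<in> set (tpath E r x)}" and "k' \<le> k"
    then obtain i where i: "i < length (tpath E r x)" "tpath E r x ! i = tpath E r b ! k"
      by (auto simp: in_set_conv_nth)
    have "i = k \<and> take (Suc i) (tpath E r x) = take (Suc i) (tpath E r b)"
      using k by (intro rt_idx[OF assms(1,2,4,3) i(1) _ i(2)]) simp
    then have "take (Suc k) (tpath E r x) = take (Suc k) (tpath E r b)" by (elim conjE) simp
    then have "k' < length (tpath E r x) \<and> tpath E r b ! k' = tpath E r x ! k'"
      using take_eq_nth[of k "tpath E r b" "tpath E r x" k'] \<open>k' \<le> k\<close> k by simp
    then show "k' \<in> {k. k < length (tpath E r b) \<and> tpath E r b ! k \<in> set (tpath E r x)}"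
      using \<open>k' \<le> k\<close> k by auto
  qed
qed

lemma mm_iff: assumes "is_tree V E" "r \<in> V" "b \<in> V" "x \<in> V" "k < length (tpath E r b)"
  shows "tpath E r b ! k \<in> set (tpath E r x) \<longleftrightarrow> k < mm E r b x"
  using mm_set[OF assms(1-4)] assms(5) by blast

lemma mm_bounds: assumes "is_tree V E" "r \<in> V" "b \<in> V" "x \<in> V"
  shows "1 \<le> mm E r b x \<and> mm E r b x \<le> length (tpath E r b)"
proof -
  have "0 < length (tpath E r b)" using rt_basic[OF assms(1-3)] by simp
  moreover have "tpath E r b ! 0 \<in> set (tpath E r x)"
  proof -
    have "0 < length (tpath E r x)" using rt_basic[OF assms(1,2,4)] by simp
    then have "tpath E r x ! 0 \<in> set (tpath E r x)" by (rule nth_mem)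
    then show ?thesis using rt_basic[OF assms(1-3)] rt_basic[OF assms(1,2,4)] by simp
  qed
  ultimately have "0 < mm E r b x" using mm_iff[OF assms, of 0] by simp
  moreover have "\<not> length (tpath E r b) < mm E r b x"
  proof
    assume "length (tpath E r b) < mm E r b x"
    then have "length (tpath E r b) \<in> {k. k < length (tpath E r b) \<and> tpath E r b ! k \<in> set (tpath E r x)}"
      unfolding mm_set[OF assms] by simp
    then show False by simp
  qed
  ultimately show ?thesis by linarith
qed

lemma mm_nth: assumes "is_tree V E" "r \<in> V" "b \<in> V" "x \<in> V" "k < length (tpath E r b)" "k < mm E r b x"
  shows "k < length (tpath E r x) \<and> tpath E r x ! k = tpath E r b ! k"
proof -
  have "tpath E r b ! k \<in> set (tpath E r x)" using mm_iff[OF assms(1-5)] assms(6) by simp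
  then obtain i where i: "i < length (tpath E r x)" "tpath E r x ! i = tpath E r b ! k"
    by (auto simp: in_set_conv_nth)
  then have "i = k" using rt_idx[OF assms(1,2,4,3) i(1) assms(5) i(2)] by simp
  then show ?thesis using i by simp
qed

definition jn :: "'a set set \<Rightarrow> 'a \<Rightarrow> 'a \<Rightarrow> 'a \<Rightarrow> nat" where
  "jn E r x y = card {i. i < length (tpath E r x) \<and> i < length (tpath E r y) \<and> tpath E r x ! i = tpath E r y ! i}"

lemma jn_set: assumes "is_tree V E" "r \<in> V" "x \<in> V" "y \<in> V"
  shows "{i. i < length (tpath E r x) \<and> i < length (tpath E r y) \<and> tpath E r x ! i = tpath E r y ! i} = {..<jn E r x y}"
  unfolding jn_def
proof (rule down_closed_card)
  let ?S = "{i. i < length (tpath E r x) \<and> i < length (tpath E r y) \<and> tpath E r x ! i = tpath E r y ! i}"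
  show "finite ?S" by simp
  show "\<forall>k\<in>?S. \<forall>k'\<le>k. k' \<in> ?S"
  proof (intro ballI allI impI)
    fix k k' assume k: "k \<in> ?S" and kk: "k' \<le> k"
    have "k = k \<and> take (Suc k) (tpath E r x) = take (Suc k) (tpath E r y)"
      using k by (intro rt_idx[OF assms(1,2,3,4)]) simp_all
    then have t: "take (Suc k) (tpath E r x) = take (Suc k) (tpath E r y)" by simp
    have "k' < length (tpath E r y) \<and> tpath E r x ! k' = tpath E r y ! k'"
      using take_eq_nth[OF t kk] k by simp
    then show "k' \<in> ?S" using kk k by simp
  qed
qed

lemma jn_iff: assumes "is_tree V E" "r \<in> V" "x \<in> V" "y \<in> V" "i < length (tpath E r x)" "i < length (tpath E r y)"
  shows "tpath E r x ! i = tpath E r y ! i \<longleftrightarrow> i < jn E r x y"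
  using jn_set[OF assms(1-4)] assms(5,6) by blast

lemma jn_bounds: assumes "is_tree V E" "r \<in> V" "x \<in> V" "y \<in> V"
  shows "1 \<le> jn E r x y \<and> jn E r x y \<le> length (tpath E r x) \<and> jn E r x y \<le> length (tpath E r y)"
proof -
  have "0 < jn E r x y" using jn_iff[OF assms, of 0] rt_basic[OF assms(1,2,3)] rt_basic[OF assms(1,2,4)] by simp
  moreover have "\<not> length (tpath E r x) < jn E r x y"
  proof
    assume "length (tpath E r x) < jn E r x y"
    then have "length (tpath E r x) \<in> {i. i < length (tpath E r x) \<and> i < length (tpath E r y) \<and> tpath E r x ! i = tpath E r y ! i}"
      unfolding jn_set[OF assms] by simp
    then show False by simp
  qed
  moreover have "\<not> length (tpath E r y) < jn E r x y"
  proof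
    assume "length (tpath E r y) < jn E r x y"
    then have "length (tpath E r y) \<in> {i. i < length (tpath E r x) \<and> i < length (tpath E r y) \<and> tpath E r x ! i = tpath E r y ! i}"
      unfolding jn_set[OF assms] by simp
    then show False by simp
  qed
  ultimately show ?thesis by linarith
qed

lemma jn_sym: "jn E r x y = jn E r y x"
proof -
  have "{i. i < length (tpath E r x) \<and> i < length (tpath E r y) \<and> tpath E r x ! i = tpath E r y ! i}
      = {i. i < length (tpath E r y) \<and> i < length (tpath E r x) \<and> tpath E r y ! i = tpath E r x ! i}"
    by (rule Collect_cong) auto
  then show ?thesis unfolding jn_def by simp
qed

lemma rt_path_drop: assumes "is_tree V E" "r \<in> V" "x \<in> V" "a < length (tpath E r x)"
  shows "is_path E (drop a (tpath E r x)) (tpath E r x ! a) x"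
proof -
  let ?p = "tpath E r x"
  have p: "is_path E ?p r x" by (rule tp_path[OF assms(1,2,3)])
  have "is_path E (drop a (take (Suc (length ?p - 1)) ?p)) (?p ! a) (?p ! (length ?p - 1))"
    using assms(4) by (intro is_path_sub[OF p]) auto
  moreover have "Suc (length ?p - 1) = length ?p" using assms(4) by simp
  moreover have "?p ! (length ?p - 1) = x" using rt_basic[OF assms(1,2,3)] by (metis last_conv_nth)
  ultimately show ?thesis by simp
qed

lemma tp_constr: assumes "is_tree V E" "r \<in> V" "x \<in> V" "y \<in> V"
  shows "tpath E x y = rev (drop (jn E r x y - 1) (tpath E r x)) @ tl (drop (jn E r x y - 1) (tpath E r y))"
proof -
  let ?J = "jn E r x y"
  let ?qx = "tpath E r x" and ?qy = "tpath E r y"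
  have B: "1 \<le> ?J" "?J \<le> length ?qx" "?J \<le> length ?qy" using jn_bounds[OF assms] by auto
  have cy: "?qx ! (?J - 1) = ?qy ! (?J - 1)" using B jn_iff[OF assms, of "?J - 1"] by simp
  have p1: "is_path E (rev (drop (?J - 1) ?qx)) x (?qx ! (?J - 1))"
    using rt_path_drop[OF assms(1,2,3), of "?J - 1"] B by (intro is_path_rev) simp
  have p2: "is_path E (drop (?J - 1) ?qy) (?qx ! (?J - 1)) y"
    using rt_path_drop[OF assms(1,2,4), of "?J - 1"] B cy by simp
  have disj: "set (rev (drop (?J - 1) ?qx)) \<inter> set (drop (?J - 1) ?qy) \<subseteq> {?qx ! (?J - 1)}"
  proof
    fix v assume "v \<in> set (rev (drop (?J - 1) ?qx)) \<inter> set (drop (?J - 1) ?qy)"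
    then obtain i i' where i: "?J - 1 \<le> i" "i < length ?qx" "v = ?qx ! i"
      and i': "?J - 1 \<le> i'" "i' < length ?qy" "v = ?qy ! i'"
      unfolding set_rev in_set_drop_iff Int_iff by blast
    have "i = i'" using rt_idx[OF assms(1,2,3,4) i(2) i'(2)] i(3) i'(3) by simp
    then have "i < ?J" using jn_iff[OF assms i(2)] i(3) i'(2,3) by simp
    then have "i = ?J - 1" using i(1) by simp
    then show "v \<in> {?qx ! (?J - 1)}" using i(3) by simp
  qed
  have "is_path E (rev (drop (?J - 1) ?qx) @ tl (drop (?J - 1) ?qy)) x y"
    by (rule is_path_append[OF p1 p2 disj])
  then show ?thesis by (intro tp_unique[OF assms(1,3,4)])
qed

lemma tp_edges_set: assumes "is_tree V E" "r \<in> V" "x \<in> V" "y \<in> V"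
  shows "path_edges (tpath E x y) = path_edges (drop (jn E r x y - 1) (tpath E r x)) \<union> path_edges (drop (jn E r x y - 1) (tpath E r y))
    \<and> set (tpath E x y) = set (drop (jn E r x y - 1) (tpath E r x)) \<union> set (drop (jn E r x y - 1) (tpath E r y))"
proof -
  let ?J = "jn E r x y"
  let ?qx = "tpath E r x" and ?qy = "tpath E r y"
  let ?A = "drop (?J - 1) ?qx" and ?B = "drop (?J - 1) ?qy"
  have B: "1 \<le> ?J" "?J \<le> length ?qx" "?J \<le> length ?qy" using jn_bounds[OF assms] by auto
  have cy: "?qx ! (?J - 1) = ?qy ! (?J - 1)" using B jn_iff[OF assms, of "?J - 1"] by simp
  have ne: "rev ?A \<noteq> []" "?B \<noteq> []" using B by auto
  have hA: "hd ?A = ?qx ! (?J - 1)" using B by (simp add: hd_drop_conv_nth)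
  have hB: "hd ?B = ?qy ! (?J - 1)" using B by (simp add: hd_drop_conv_nth)
  have lh: "last (rev ?A) = hd ?B" using hA hB cy ne by (simp add: last_rev)
  have e: "path_edges (rev ?A @ tl ?B) = path_edges ?A \<union> path_edges ?B"
    using pe_append_tl[OF ne lh] by simp
  have "?B = hd ?B # tl ?B" using ne by simp
  then have "set ?B = insert (hd ?B) (set (tl ?B))" by (metis list.simps(15))
  moreover have "hd ?B \<in> set ?A"
  proof -
    have "?A \<noteq> []" using B by simp
    then have "hd ?A \<in> set ?A" by (rule hd_in_set)
    then show ?thesis using hA hB cy by simp
  qed
  ultimately have s: "set (rev ?A @ tl ?B) = set ?A \<union> set ?B" by auto
  show ?thesis using e s tp_constr[OF assms] by simp
qed

lemma Pl_pair: "Pl E {x,y} = path_edges (tpath E x y) \<union> path_edges (tpath E y x)"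
proof -
  have "{path_edges (tpath E x' y') | x' y'. {x,y} = {x',y'}} = {path_edges (tpath E x y), path_edges (tpath E y x)}"
    by (auto simp: doubleton_eq_iff)
  then show ?thesis unfolding Pl_def by simp
qed

lemma Vl_pair: "Vl E {x,y} = set (tpath E x y) \<union> set (tpath E y x)"
proof -
  have "{set (tpath E x' y') | x' y'. {x,y} = {x',y'}} = {set (tpath E x y), set (tpath E y x)}"
    by (auto simp: doubleton_eq_iff)
  then show ?thesis unfolding Vl_def by simp
qed

lemma Pl_xy: assumes "is_tree V E" "r \<in> V" "x \<in> V" "y \<in> V"
  shows "Pl E {x,y} = path_edges (drop (jn E r x y - 1) (tpath E r x)) \<union> path_edges (drop (jn E r x y - 1) (tpath E r y))"
  using Pl_pair[of E x y] tp_edges_set[OF assms] tp_edges_set[OF assms(1,2,4,3)] jn_sym[of E r x y] by auto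

lemma Vl_xy: assumes "is_tree V E" "r \<in> V" "x \<in> V" "y \<in> V"
  shows "Vl E {x,y} = set (drop (jn E r x y - 1) (tpath E r x)) \<union> set (drop (jn E r x y - 1) (tpath E r y))"
  using Vl_pair[of E x y] tp_edges_set[OF assms] tp_edges_set[OF assms(1,2,4,3)] jn_sym[of E r x y] by auto

lemma edge_half: assumes "is_tree V E" "r \<in> V" "b \<in> V" "x \<in> V" "Suc k < length (tpath E r b)"
  shows "{tpath E r b ! k, tpath E r b ! Suc k} \<in> path_edges (drop a (tpath E r x)) \<longleftrightarrow> a \<le> k \<and> Suc k < mm E r b x"
proof
  let ?Q = "tpath E r b" and ?q = "tpath E r x"
  assume "{?Q ! k, ?Q ! Suc k} \<in> path_edges (drop a ?q)"
  then obtain i where i: "a \<le> i" "Suc i < length ?q" "{?Q ! k, ?Q ! Suc k} = {?q ! i, ?q ! Suc i}"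
    unfolding pe_drop by blast
  from i(3) consider "?Q ! k = ?q ! i" "?Q ! Suc k = ?q ! Suc i" | "?Q ! k = ?q ! Suc i" "?Q ! Suc k = ?q ! i"
    by (auto simp: doubleton_eq_iff)
  then show "a \<le> k \<and> Suc k < mm E r b x"
  proof cases
    case 1
    have "i = k" using rt_idx[OF assms(1,2,4,3), of i k] i(2) assms(5) 1(1) by simp
    moreover have "?Q ! Suc k \<in> set ?q" using 1(2) i(2) by simp
    then have "Suc k < mm E r b x" using mm_iff[OF assms(1-4,5)] by simp
    ultimately show ?thesis using i(1) by simp
  next
    case 2
    have "Suc i = k" using rt_idx[OF assms(1,2,4,3), of "Suc i" k] i(2) assms(5) 2(1) by simp
    moreover have "i = Suc k" using rt_idx[OF assms(1,2,4,3), of i "Suc k"] i(2) assms(5) 2(2) by simp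
    ultimately show ?thesis by simp
  qed
next
  let ?Q = "tpath E r b" and ?q = "tpath E r x"
  assume a: "a \<le> k \<and> Suc k < mm E r b x"
  have n1: "Suc k < length ?q \<and> ?q ! Suc k = ?Q ! Suc k" using mm_nth[OF assms(1-5)] a by simp
  have n0: "?q ! k = ?Q ! k" using mm_nth[OF assms(1-4), of k] a assms(5) by simp
  have "{?Q ! k, ?Q ! Suc k} = {?q ! k, ?q ! Suc k}" using n0 n1 by simp
  then show "{?Q ! k, ?Q ! Suc k} \<in> path_edges (drop a ?q)" unfolding pe_drop using a n1 by blast
qed

lemma edge_full: assumes "is_tree V E" "r \<in> V" "b \<in> V" "x \<in> V" "y \<in> V" "Suc k < length (tpath E r b)"
  shows "{tpath E r b ! k, tpath E r b ! Suc k} \<in> Pl E {x,y} \<longleftrightarrow> (Suc k < mm E r b x) \<noteq> (Suc k < mm E r b y)"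
proof -
  let ?Q = "tpath E r b" and ?qx = "tpath E r x" and ?qy = "tpath E r y"
  let ?J = "jn E r x y"
  have JB: "1 \<le> ?J" "?J \<le> length ?qx" "?J \<le> length ?qy" using jn_bounds[OF assms(1,2,4,5)] by auto
  have e: "{?Q ! k, ?Q ! Suc k} \<in> Pl E {x,y} \<longleftrightarrow> (?J - 1 \<le> k \<and> Suc k < mm E r b x) \<or> (?J - 1 \<le> k \<and> Suc k < mm E r b y)"
    unfolding Pl_xy[OF assms(1,2,4,5)] Un_iff edge_half[OF assms(1-4,6)] edge_half[OF assms(1-3,5,6)] by simp
  have A: "Suc k < ?J" if "Suc k < mm E r b x" "Suc k < mm E r b y"
  proof -
    have "Suc k < length ?qx \<and> ?qx ! Suc k = ?Q ! Suc k" using mm_nth[OF assms(1-4,6)] that by simp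
    moreover have "Suc k < length ?qy \<and> ?qy ! Suc k = ?Q ! Suc k" using mm_nth[OF assms(1-3,5,6)] that by simp
    ultimately show ?thesis using jn_iff[OF assms(1,2,4,5), of "Suc k"] by simp
  qed
  have Bx: "Suc k < mm E r b y" if "Suc k < ?J" "Suc k < mm E r b x"
  proof -
    have l: "Suc k < length ?qx" "Suc k < length ?qy" using that JB by auto
    have "?qx ! Suc k = ?qy ! Suc k" using jn_iff[OF assms(1,2,4,5) l] that by simp
    moreover have "?qx ! Suc k = ?Q ! Suc k" using mm_nth[OF assms(1-4,6)] that by simp
    ultimately have "?Q ! Suc k \<in> set ?qy" using l(2) by (metis nth_mem)
    then show ?thesis using mm_iff[OF assms(1-3,5,6)] by simp
  qed
  have By: "Suc k < mm E r b x" if "Suc k < ?J" "Suc k < mm E r b y"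
  proof -
    have l: "Suc k < length ?qx" "Suc k < length ?qy" using that JB by auto
    have "?qx ! Suc k = ?qy ! Suc k" using jn_iff[OF assms(1,2,4,5) l] that by simp
    moreover have "?qy ! Suc k = ?Q ! Suc k" using mm_nth[OF assms(1-3,5,6)] that by simp
    ultimately have "?Q ! Suc k \<in> set ?qx" using l(1) by (metis nth_mem)
    then show ?thesis using mm_iff[OF assms(1-4,6)] by simp
  qed
  show ?thesis unfolding e using A Bx By JB(1) by (metis Suc_leI le_diff_conv not_less add_Suc_right add_0_right One_nat_def)
qed

lemma apex_xy: assumes "is_tree V E" "r \<in> V" "x \<in> V" "y \<in> V"
  shows "apex E r {x,y} = tpath E r x ! (jn E r x y - 1)"
proof -
  let ?qx = "tpath E r x" and ?qy = "tpath E r y"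
  let ?J = "jn E r x y"
  let ?c = "?qx ! (?J - 1)"
  have JB: "1 \<le> ?J" "?J \<le> length ?qx" "?J \<le> length ?qy" using jn_bounds[OF assms] by auto
  have cy: "?qy ! (?J - 1) = ?c" using JB jn_iff[OF assms, of "?J - 1"] by simp
  have dc: "depth E r ?c = ?J - 1" using rt_depth[OF assms(1-3)] JB by simp
  have mem: "\<exists>i. ?J - 1 \<le> i \<and> ((i < length ?qx \<and> v = ?qx ! i) \<or> (i < length ?qy \<and> v = ?qy ! i))"
    if "v \<in> Vl E {x,y}" for v
    using that unfolding Vl_xy[OF assms] Un_iff in_set_drop_iff by blast
  have dep: "depth E r v \<ge> ?J - 1 \<and> (depth E r v = ?J - 1 \<longrightarrow> v = ?c)" if vV: "v \<in> Vl E {x,y}" for v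
  proof -
    obtain i where i: "?J - 1 \<le> i" "(i < length ?qx \<and> v = ?qx ! i) \<or> (i < length ?qy \<and> v = ?qy ! i)"
      using mem[OF vV] by blast
    from i(2) show ?thesis
    proof
      assume h: "i < length ?qx \<and> v = ?qx ! i"
      then have "depth E r v = i" using rt_depth[OF assms(1-3)] by simp
      then show ?thesis using h i(1) by simp
    next
      assume h: "i < length ?qy \<and> v = ?qy ! i"
      then have "depth E r v = i" using rt_depth[OF assms(1,2,4)] by simp
      then show ?thesis using h i(1) cy by auto
    qed
  qed
  have cin: "?c \<in> Vl E {x,y}" unfolding Vl_xy[OF assms] Un_iff in_set_drop_iff using JB by auto
  show ?thesis unfolding apex_def
  proof (rule the_equality)
    show "?c \<in> Vl E {x,y} \<and> (\<forall>b\<in>Vl E {x,y}. depth E r ?c \<le> depth E r b)"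
    proof (intro conjI ballI)
      show "?c \<in> Vl E {x,y}" by (rule cin)
      fix v assume "v \<in> Vl E {x,y}"
      then have "depth E r v \<ge> ?J - 1" using dep by blast
      then show "depth E r ?c \<le> depth E r v" using dc by simp
    qed
  next
    fix a assume "a \<in> Vl E {x,y} \<and> (\<forall>b\<in>Vl E {x,y}. depth E r a \<le> depth E r b)"
    then have "a \<in> Vl E {x,y}" "depth E r a \<le> depth E r ?c" using cin by auto
    then have "depth E r a \<ge> ?J - 1 \<and> (depth E r a = ?J - 1 \<longrightarrow> a = ?c)" using dep by blast
    moreover have "depth E r a = ?J - 1" using calculation \<open>depth E r a \<le> depth E r ?c\<close> dc by linarith
    ultimately show "a = ?c" by blast
  qed
qed

lemma apex_Q: assumes "is_tree V E" "r \<in> V" "b \<in> V" "x \<in> V" "y \<in> V" "mm E r b y < mm E r b x"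
  shows "apex E r {x,y} = tpath E r b ! (mm E r b y - 1)"
proof -
  let ?Q = "tpath E r b" and ?qx = "tpath E r x" and ?qy = "tpath E r y"
  let ?J = "jn E r x y" and ?m = "mm E r b y"
  have JB: "1 \<le> ?J" "?J \<le> length ?qx" "?J \<le> length ?qy" using jn_bounds[OF assms(1,2,4,5)] by auto
  have mx: "1 \<le> mm E r b x" "mm E r b x \<le> length ?Q" using mm_bounds[OF assms(1-4)] by auto
  have my: "1 \<le> ?m" "?m \<le> length ?Q" using mm_bounds[OF assms(1-3,5)] by auto
  have k0: "?m - 1 < length ?Q" "?m - 1 < mm E r b x" "?m - 1 < ?m" using mx my assms(6) by auto
  have ax: "?m - 1 < length ?qx \<and> ?qx ! (?m - 1) = ?Q ! (?m - 1)" using mm_nth[OF assms(1-4) k0(1,2)] .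
  have ay: "?m - 1 < length ?qy \<and> ?qy ! (?m - 1) = ?Q ! (?m - 1)" using mm_nth[OF assms(1-3,5) k0(1,3)] .
  have J1: "?m - 1 < ?J" using jn_iff[OF assms(1,2,4,5), of "?m - 1"] ax ay by simp
  have J2: "\<not> ?m < ?J"
  proof
    assume h: "?m < ?J"
    have l: "?m < length ?Q" using assms(6) mx by simp
    have bx: "?m < length ?qx \<and> ?qx ! ?m = ?Q ! ?m" using mm_nth[OF assms(1-4) l assms(6)] .
    have ly: "?m < length ?qy" using h JB by simp
    have "?qx ! ?m = ?qy ! ?m" using jn_iff[OF assms(1,2,4,5) _ ly] bx h by simp
    then have "?Q ! ?m \<in> set ?qy" using bx ly by (metis nth_mem)
    then show False using mm_iff[OF assms(1-3,5) l] by simp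
  qed
  have "?J = ?m" using J1 J2 my by simp
  then show ?thesis using apex_xy[OF assms(1,2,4,5)] ax by simp
qed

lemma comb_inS:
  assumes cov: "\<forall>k\<in>{k. dt \<le> k \<and> Suc k < n}. \<exists>l\<in>Fu. lo l \<le> k \<and> k < hi l"
    and l: "l \<in> Fu" and k: "k \<in> {k \<in> {k. dt \<le> k \<and> Suc k < n}. \<forall>l'\<in>Fu - {l}. \<not> (lo l' \<le> k \<and> k < hi l')}"
  shows "lo l \<le> k \<and> k < hi l"
proof -
  obtain l' where "l' \<in> Fu" "lo l' \<le> k \<and> k < hi l'" using cov k by blast
  then show ?thesis using k by (cases "l' = l") auto
qed

lemma comb:
  fixes lo hi :: "'b \<Rightarrow> nat" and Fu :: "'b set" and dt n :: nat
  defines "K \<equiv> {k. dt \<le> k \<and> Suc k < n}"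
  defines "R \<equiv> \<lambda>l. {k \<in> K. \<forall>l'\<in>Fu - {l}. \<not> (lo l' \<le> k \<and> k < hi l')}"
  assumes cov: "\<forall>k\<in>K. \<exists>l\<in>Fu. lo l \<le> k \<and> k < hi l"
    and ne: "\<forall>l\<in>Fu. R l \<noteq> {}"
    and l12: "l1 \<in> Fu" "l2 \<in> Fu" "l1 \<noteq> l2"
    and ord: "\<forall>k\<in>R l1. \<forall>k'\<in>R l2. k < k'"
  shows "lo l1 < lo l2 \<and> (\<exists>\<alpha> \<beta>. lo l1 \<le> \<alpha> \<and> \<alpha> < \<beta> \<and> \<beta> \<le> lo l2 \<and> R l1 = {\<alpha>..<\<beta>})"
proof -
  have inS: "lo l \<le> k \<and> k < hi l" if "l \<in> Fu" "k \<in> R l" for l k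
    using comb_inS[of dt n Fu lo hi l k] cov that unfolding K_def R_def by blast
  obtain k where k: "k \<in> R l1" using ne l12 by blast
  obtain k' where k': "k' \<in> R l2" using ne l12 by blast
  have kk: "k < k'" using ord k k' by blast
  have s1: "lo l1 \<le> k \<and> k < hi l1" using inS l12 k by blast
  have s2: "lo l2 \<le> k' \<and> k' < hi l2" using inS l12 k' by blast
  have n2: "\<not> (lo l2 \<le> k \<and> k < hi l2)" using k l12 unfolding R_def by blast
  have lt: "lo l1 < lo l2"
  proof (rule ccontr)
    assume "\<not> lo l1 < lo l2"
    then show False using s1 s2 n2 kk by linarith
  qed
  have sub: "lo l1 \<le> z \<and> z < lo l2" if "z \<in> R l1" for z
  proof -
    have "lo l1 \<le> z \<and> z < hi l1" using inS l12 that by blast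
    moreover have "\<not> (lo l2 \<le> z \<and> z < hi l2)" using that l12 unfolding R_def by blast
    moreover have "z < k'" using ord that k' by blast
    ultimately show ?thesis using s2 by linarith
  qed
  have conv: "c \<in> R l1" if ab: "a \<in> R l1" "b \<in> R l1" "a \<le> c" "c \<le> b" for a b c
  proof -
    have "c \<in> K" using ab unfolding R_def K_def by auto
    moreover have "\<not> (lo l' \<le> c \<and> c < hi l')" if l': "l' \<in> Fu - {l1}" for l'
    proof
      assume sc: "lo l' \<le> c \<and> c < hi l'"
      have na: "\<not> (lo l' \<le> a \<and> a < hi l')" using ab(1) l' unfolding R_def by blast
      have nb: "\<not> (lo l' \<le> b \<and> b < hi l')" using ab(2) l' unfolding R_def by blast
      have "a < lo l'" "hi l' \<le> b" using na nb sc ab(3,4) by linarith+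
      obtain z where z: "z \<in> R l'" using ne l' by blast
      have sz: "lo l' \<le> z \<and> z < hi l'" using inS l' z by blast
      have "lo l1 \<le> a \<and> a < hi l1" "lo l1 \<le> b \<and> b < hi l1" using inS l12 ab by blast+
      then have "lo l1 \<le> z \<and> z < hi l1" using sz \<open>a < lo l'\<close> \<open>hi l' \<le> b\<close> by linarith
      moreover have "l1 \<in> Fu - {l'}" using l' l12 by blast
      ultimately show False using z unfolding R_def by blast
    qed
    ultimately show ?thesis unfolding R_def by blast
  qed
  have fin: "finite (R l1)" unfolding R_def K_def by (rule finite_subset[of _ "{..<n}"]) auto
  have nR: "R l1 \<noteq> {}" using k by blast
  let ?a = "Min (R l1)" and ?b = "Suc (Max (R l1))"
  have aR: "?a \<in> R l1" using Min_in[OF fin nR] .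
  have bR: "Max (R l1) \<in> R l1" using Max_in[OF fin nR] .
  have eq: "R l1 = {?a..<?b}"
  proof
    show "R l1 \<subseteq> {?a..<?b}" using Min_le[OF fin] Max_ge[OF fin] by (auto simp: less_Suc_eq_le)
    show "{?a..<?b} \<subseteq> R l1" using conv[OF aR bR] by (auto simp: less_Suc_eq_le)
  qed
  have "lo l1 \<le> ?a" using sub aR by blast
  moreover have "?a < ?b" using Min_le[OF fin bR] by simp
  moreover have "?b \<le> lo l2" using sub bR by (simp add: Suc_leI)
  ultimately show ?thesis using lt eq by blast
qed

lemma dt_split: assumes "a \<le> b" "b \<le> c"
  shows "drop a (take b xs) @ drop b (take c xs) = drop a (take c xs)"
proof -
  have tc: "take c xs = take b xs @ drop b (take c xs)"
    using assms(2) by (metis append_take_drop_id min.absorb1 take_take)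
  show ?thesis
  proof (cases "a \<le> length (take b xs)")
    case True
    then show ?thesis using tc by (metis drop_append diff_is_0_eq drop_0)
  next
    case False
    then have "length xs < b" using assms(1) by simp
    then have "drop b (take c xs) = []" by simp
    moreover have "drop a (take b xs) = []" using False assms(1) by simp
    moreover have "drop a (take c xs) = []" using False assms \<open>length xs < b\<close> by simp
    ultimately show ?thesis by simp
  qed
qed

theorem lemma8:
  fixes V :: "'a set" and E :: "'a set set" and L :: "'a set set" and w :: "'a set \<Rightarrow> real"
    and r :: 'a and F :: "'a set set" and u :: "'a set" and t b :: 'a
    and Fu :: "'a set set" and l1 l2 :: "'a set"
  assumes tree: "is_tree V E"
    and links: "\<forall>l\<in>L. is_link V l"
    and weights: "\<forall>l\<in>L. w l > 0"
    and root: "r \<in> V"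
    and F_sub: "F \<subseteq> L"
    and F_sol: "\<Union>(Pl E ` F) = E"
    and u_in: "u \<in> L" and u_eq: "u = {t, b}" and u_up: "ancestor E r t b"
    and Fu_sub: "Fu \<subseteq> Bset E r F (vu E r F u t)"
    and Fu_cov: "Pl E u \<subseteq> \<Union>(Pl E ` Fu)"
    and Fu_min: "\<forall>F'. F' \<subset> Fu \<longrightarrow> \<not> Pl E u \<subseteq> \<Union>(Pl E ` F')"
    and pair: "(l1, l2) \<in> Au E Fu u t b"
  shows "strict_ancestor E r (apex E r l1) (apex E r l2) \<and>
         (\<exists>xs ys zs. tpath E (apex E r l1) (apex E r l2) = xs @ ys @ zs \<and>
                     Pul E Fu u l1 = path_edges ys)"
proof -
  have uL: "is_link V u" using links u_in by blast
  then obtain x0 y0 where "x0 \<in> V" "y0 \<in> V" "u = {x0, y0}" unfolding is_link_def by blast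
  then have tV: "t \<in> V" and bV: "b \<in> V" using u_eq by (auto simp: doubleton_eq_iff)
  define Q where "Q = tpath E r b"
  define n where "n = length Q"
  have Qb: "Q \<noteq> [] \<and> Q ! 0 = r \<and> last Q = b \<and> distinct Q \<and> set Q \<subseteq> V"
    unfolding Q_def by (rule rt_basic[OF tree root bV])
  have Qp: "is_path E Q r b" unfolding Q_def by (rule tp_path[OF tree root bV])
  have "t \<in> set Q" using u_up unfolding ancestor_def Q_def .
  then obtain dt where dt: "dt < n" "Q ! dt = t" unfolding n_def by (auto simp: in_set_conv_nth)
  have tb: "tpath E t b = drop dt Q"
  proof -
    have "is_path E (drop dt Q) (Q ! dt) b" unfolding Q_def
      by (rule rt_path_drop[OF tree root bV]) (use dt in \<open>simp add: Q_def n_def\<close>)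
    then have "is_path E (drop dt Q) t b" using dt by simp
    then show ?thesis by (rule tp_unique[OF tree tV bV])
  qed
  have bt: "tpath E b t = rev (drop dt Q)"
  proof -
    have "is_path E (drop dt Q) t b" using tb tp_path[OF tree tV bV] by simp
    then have "is_path E (rev (drop dt Q)) b t" by (rule is_path_rev)
    then show ?thesis by (rule tp_unique[OF tree bV tV])
  qed
  have PluQ: "Pl E u = {{Q!k, Q!Suc k} | k. dt \<le> k \<and> Suc k < n}"
    unfolding u_eq Pl_pair tb bt pe_rev pe_drop n_def by simp
  have FuL: "Fu \<subseteq> L" using Fu_sub F_sub unfolding Bset_def by blast
  have "\<forall>l\<in>Fu. \<exists>x. \<exists>y. x \<in> V \<and> y \<in> V \<and> l = {x, y}" using FuL links unfolding is_link_def by blast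
  then obtain X where "\<forall>l\<in>Fu. \<exists>y. X l \<in> V \<and> y \<in> V \<and> l = {X l, y}" by metis
  then obtain Y where XY: "\<forall>l\<in>Fu. X l \<in> V \<and> Y l \<in> V \<and> l = {X l, Y l}" by metis
  define lo where "lo l = min (mm E r b (X l)) (mm E r b (Y l)) - 1" for l
  define hi where "hi l = max (mm E r b (X l)) (mm E r b (Y l)) - 1" for l
  have F1: "{Q!k, Q!Suc k} \<in> Pl E l \<longleftrightarrow> lo l \<le> k \<and> k < hi l" if l: "l \<in> Fu" and k: "Suc k < n" for l k
  proof -
    have xy: "X l \<in> V" "Y l \<in> V" "l = {X l, Y l}" using XY l by auto
    have m1: "1 \<le> mm E r b (X l)" "1 \<le> mm E r b (Y l)" using mm_bounds[OF tree root bV xy(1)] mm_bounds[OF tree root bV xy(2)] by auto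
    have "{Q!k, Q!Suc k} \<in> Pl E l \<longleftrightarrow> (Suc k < mm E r b (X l)) \<noteq> (Suc k < mm E r b (Y l))"
      unfolding Q_def using edge_full[OF tree root bV xy(1,2), of k] k xy(3) unfolding n_def Q_def by simp
    also have "\<dots> \<longleftrightarrow> lo l \<le> k \<and> k < hi l" unfolding lo_def hi_def using m1 by auto
    finally show ?thesis .
  qed
  have F2: "apex E r l = Q ! (lo l)" if l: "l \<in> Fu" and k: "lo l \<le> k" "k < hi l" for l k
  proof -
    have xy: "X l \<in> V" "Y l \<in> V" "l = {X l, Y l}" using XY l by auto
    have "mm E r b (X l) \<noteq> mm E r b (Y l)" using k unfolding lo_def hi_def by auto
    then consider "mm E r b (Y l) < mm E r b (X l)" | "mm E r b (X l) < mm E r b (Y l)" by linarith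
    then show ?thesis
    proof cases
      case 1
      then show ?thesis using apex_Q[OF tree root bV xy(1,2) 1] xy(3) unfolding lo_def Q_def by simp
    next
      case 2
      have "l = {Y l, X l}" using xy(3) by (simp add: insert_commute)
      then show ?thesis using apex_Q[OF tree root bV xy(2,1) 2] using 2 unfolding lo_def Q_def by simp
    qed
  qed
  define K where "K = {k. dt \<le> k \<and> Suc k < n}"
  define R where "R = (\<lambda>l. {k \<in> K. \<forall>l'\<in>Fu - {l}. \<not> (lo l' \<le> k \<and> k < hi l')})"
  have PulR: "Pul E Fu u l = {{Q!k, Q!Suc k} | k. k \<in> R l}" if l: "l \<in> Fu" for l
  proof (rule set_eqI)
    fix e
    show "e \<in> Pul E Fu u l \<longleftrightarrow> e \<in> {{Q!k, Q!Suc k} | k. k \<in> R l}"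
    proof
      assume "e \<in> Pul E Fu u l"
      then have e1: "e \<in> Pl E u" and e2: "\<forall>l'\<in>Fu - {l}. e \<notin> Pl E l'" unfolding Pul_def by auto
      obtain k where k: "dt \<le> k" "Suc k < n" "e = {Q!k, Q!Suc k}" using e1 unfolding PluQ by blast
      have "k \<in> R l" unfolding R_def K_def using k e2 F1 by auto
      then show "e \<in> {{Q!k, Q!Suc k} | k. k \<in> R l}" using k by blast
    next
      assume "e \<in> {{Q!k, Q!Suc k} | k. k \<in> R l}"
      then obtain k where k: "k \<in> R l" "e = {Q!k, Q!Suc k}" by blast
      have "e \<in> Pl E u" using k unfolding PluQ R_def K_def by blast
      moreover have "\<forall>l'\<in>Fu - {l}. e \<notin> Pl E l'" using k F1 unfolding R_def K_def by auto
      ultimately show "e \<in> Pul E Fu u l" unfolding Pul_def by blast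
    qed
  qed
  have cov: "\<forall>k\<in>K. \<exists>l\<in>Fu. lo l \<le> k \<and> k < hi l"
  proof
    fix k assume k: "k \<in> K"
    then have "{Q!k, Q!Suc k} \<in> Pl E u" unfolding PluQ K_def by blast
    then obtain l where "l \<in> Fu" "{Q!k, Q!Suc k} \<in> Pl E l" using Fu_cov by blast
    then show "\<exists>l\<in>Fu. lo l \<le> k \<and> k < hi l" using F1 k unfolding K_def by blast
  qed
  have ne: "\<forall>l\<in>Fu. R l \<noteq> {}"
  proof
    fix l assume l: "l \<in> Fu"
    have "Fu - {l} \<subset> Fu" using l by blast
    then have "\<not> Pl E u \<subseteq> \<Union>(Pl E ` (Fu - {l}))" using Fu_min by blast
    then have "Pul E Fu u l \<noteq> {}" unfolding Pul_def by blast
    then show "R l \<noteq> {}" using PulR[OF l] by blast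
  qed
  obtain ls i where ls: "l1 = ls ! i" "l2 = ls ! Suc i" "distinct ls" "set ls = Fu"
    "sorted_wrt (prec_u E Fu u t b) ls" "Suc i < length ls"
    using pair unfolding Au_def by blast
  have l12: "l1 \<in> Fu" "l2 \<in> Fu" "l1 \<noteq> l2" using ls by (auto simp: nth_eq_iff_index_eq)
  have pr: "prec_u E Fu u t b l1 l2" using ls by (simp add: sorted_wrt_nth_less)
  have ord: "\<forall>k\<in>R l1. \<forall>k'\<in>R l2. k < k'"
  proof (intro ballI)
    fix k k' assume k: "k \<in> R l1" and k': "k' \<in> R l2"
    have kK: "dt \<le> k" "Suc k < n" "dt \<le> k'" "Suc k' < n" using k k' unfolding R_def K_def by auto
    let ?p = "tpath E t b"
    have lp: "length ?p = n - dt" unfolding tb n_def by simp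
    have pn: "?p ! j = Q ! (dt + j)" if "j < length ?p" for j using that dt unfolding tb n_def by simp
    have a1: "Suc (k - dt) < length ?p" "Suc (k' - dt) < length ?p" using kK lp by auto
    have e1: "{?p ! (k - dt), ?p ! Suc (k - dt)} \<in> Pul E Fu u l1"
    proof -
      have "{?p ! (k - dt), ?p ! Suc (k - dt)} = {Q!k, Q!Suc k}" using pn a1 kK by simp
      then show ?thesis using PulR[OF l12(1)] k by blast
    qed
    have e2: "{?p ! (k' - dt), ?p ! Suc (k' - dt)} \<in> Pul E Fu u l2"
    proof -
      have "{?p ! (k' - dt), ?p ! Suc (k' - dt)} = {Q!k', Q!Suc k'}" using pn a1 kK by simp
      then show ?thesis using PulR[OF l12(2)] k' by blast
    qed
    have "k - dt < k' - dt" using pr a1 e1 e2 unfolding prec_u_def Let_def by blast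
    then show "k < k'" using kK by linarith
  qed
  have C: "lo l1 < lo l2 \<and> (\<exists>\<alpha> \<beta>. lo l1 \<le> \<alpha> \<and> \<alpha> < \<beta> \<and> \<beta> \<le> lo l2 \<and> R l1 = {\<alpha>..<\<beta>})"
    using comb[of dt n Fu lo hi l1 l2] cov ne l12 ord unfolding K_def R_def by blast
  then obtain \<alpha> \<beta> where ab: "lo l1 \<le> \<alpha>" "\<alpha> < \<beta>" "\<beta> \<le> lo l2" "R l1 = {\<alpha>..<\<beta>}" by blast
  have inS: "lo l \<le> k \<and> k < hi l" if "l \<in> Fu" "k \<in> R l" for l k
    using comb_inS[of dt n Fu lo hi l k] cov that unfolding K_def R_def by blast
  have "\<alpha> \<in> R l1" using ab by simp
  then have ap1: "apex E r l1 = Q ! (lo l1)" using inS[OF l12(1)] F2[OF l12(1)] by blast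
  obtain k' where k': "k' \<in> R l2" using ne l12 by blast
  then have ap2: "apex E r l2 = Q ! (lo l2)" using inS[OF l12(2)] F2[OF l12(2)] by blast
  have lo2n: "Suc (lo l2) < n" using k' inS[OF l12(2) k'] unfolding R_def K_def by auto
  have lt: "lo l1 < lo l2" using C by blast
  have q2: "tpath E r (Q ! lo l2) = take (Suc (lo l2)) Q"
    unfolding Q_def by (rule rt_take[OF tree root bV]) (use lo2n in \<open>simp add: n_def Q_def\<close>)
  have anc: "strict_ancestor E r (apex E r l1) (apex E r l2)"
  proof -
    have "Q ! lo l1 = take (Suc (lo l2)) Q ! lo l1" using lt by simp
    moreover have "lo l1 < length (take (Suc (lo l2)) Q)" using lt lo2n unfolding n_def by simp
    ultimately have "Q ! lo l1 \<in> set (take (Suc (lo l2)) Q)" by (metis nth_mem)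
    moreover have "Q ! lo l1 \<noteq> Q ! lo l2" using Qb lt lo2n unfolding n_def by (simp add: nth_eq_iff_index_eq)
    ultimately show ?thesis unfolding strict_ancestor_def ancestor_def ap1 ap2 q2 by simp
  qed
  have V12: "Q ! lo l1 \<in> V" "Q ! lo l2 \<in> V" using Qb lt lo2n unfolding n_def by (auto intro: nth_mem)
  have tp12: "tpath E (Q ! lo l1) (Q ! lo l2) = drop (lo l1) (take (Suc (lo l2)) Q)"
  proof -
    have "is_path E (drop (lo l1) (take (Suc (lo l2)) Q)) (Q ! lo l1) (Q ! lo l2)"
      using lt lo2n unfolding n_def by (intro is_path_sub[OF Qp]) auto
    then show ?thesis by (rule tp_unique[OF tree V12])
  qed
  have split: "drop (lo l1) (take (Suc (lo l2)) Q) =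
      drop (lo l1) (take \<alpha> Q) @ drop \<alpha> (take (Suc \<beta>) Q) @ drop (Suc \<beta>) (take (Suc (lo l2)) Q)"
    using dt_split[of "lo l1" \<alpha> "Suc (lo l2)" Q] dt_split[of \<alpha> "Suc \<beta>" "Suc (lo l2)" Q] ab by simp
  have pul: "Pul E Fu u l1 = path_edges (drop \<alpha> (take (Suc \<beta>) Q))"
  proof -
    have "Pul E Fu u l1 = {{Q!k, Q!Suc k} | k. k \<in> {\<alpha>..<\<beta>}}" using PulR[OF l12(1)] ab by simp
    also have "\<dots> = {{Q!k, Q!Suc k} | k. \<alpha> \<le> k \<and> Suc k < min (Suc \<beta>) (length Q)}"
    proof -
      have "\<And>k. (k \<in> {\<alpha>..<\<beta>}) = (\<alpha> \<le> k \<and> Suc k < min (Suc \<beta>) (length Q))"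
        using ab lo2n unfolding n_def by auto
      then show ?thesis by simp
    qed
    also have "\<dots> = path_edges (drop \<alpha> (take (Suc \<beta>) Q))" by (rule pe_sub[symmetric])
    finally show ?thesis .
  qed
  have ex: "\<exists>xs ys zs. tpath E (apex E r l1) (apex E r l2) = xs @ ys @ zs \<and> Pul E Fu u l1 = path_edges ys"
    unfolding ap1 ap2 tp12
    by (rule exI[of _ "drop (lo l1) (take \<alpha> Q)"], rule exI[of _ "drop \<alpha> (take (Suc \<beta>) Q)"],
        rule exI[of _ "drop (Suc \<beta>) (take (Suc (lo l2)) Q)"], rule conjI[OF split pul])
  show ?thesis by (rule conjI[OF anc ex])
qed

end
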